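(* Consider estimation of the open-loop scalar system $\dot X(t)=aX(t)$, $a>0$, with random initial state $|X(0)|<L$, over the timing channel described in the context. If there exists $\Gamma_0>1$ such that along the sequence of estimation times $t_n=\Gamma_0\,\mathbb{E}(\mathcal{T}_n)$ the estimates satisfy $|X(t_n)-\hat X(t_n)|\to0$ in probability as $n\to\infty$, then there is an estimator with $|X(t)-\hat X(t)|\to0$ in probability as $t\to\infty$.
   Context: Timing channel: symbols from a one-element alphabet; initialized with a symbol received at time $0$; after the acknowledgment of the $i$-th reception the sender waits $W_{i+1}\ge0$ and transmits the next symbol, received after a random delay $S_{i+1}\ge0$; the $W_i$ are i.i.d. (random codebook), the $S_i$ are i.i.d. and independent of the $W_i$; $D_i=W_i+S_i$, $\mathcal{T}_n=\sum_{i=1}^nD_i$. The estimator at time $t$ uses the inter-reception times of all symbols received up to time $t$, $L$ and the dynamics. *)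

theory Defs
  imports "HOL-Probability.Probability"
begin

text \<open>Reception time of the i-th symbol (i \<ge> 1) given the inter-reception times d:
  T_i = d 1 + ... + d i.  (Index 0 is unused; the initial symbol arrives at time 0.)\<close>
definition arrival :: "(nat \<Rightarrow> real) \<Rightarrow> nat \<Rightarrow> real" where
  "arrival d i = (\<Sum>j=1..i. d j)"

definition obs_eq :: "real \<Rightarrow> (nat \<Rightarrow> real) \<Rightarrow> (nat \<Rightarrow> real) \<Rightarrow> bool" where
  "obs_eq t d d' \<longleftrightarrow> (\<forall>i\<ge>1. (arrival d i \<le> t \<longleftrightarrow> arrival d' i \<le> t)
                             \<and> (arrival d i \<le> t \<longrightarrow> d i = d' i))"

text \<open>An estimator maps the time t and the inter-reception sequence to an estimate; it is
  admissible (causal) if at time t it only depends on the inter-reception times of the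
  symbols received up to time t. (L and the dynamics a are fixed parameters, so they may be
  used freely.)\<close>
definition causal_estimator :: "(real \<Rightarrow> (nat \<Rightarrow> real) \<Rightarrow> real) \<Rightarrow> bool" where
  "causal_estimator e \<longleftrightarrow> (\<forall>t d d'. obs_eq t d d' \<longrightarrow> e t d = e t d')"

end

theory Submission
  imports Defs
begin

definition pc :: "real \<Rightarrow> (nat \<Rightarrow> real) \<Rightarrow> bool" where
  "pc t d \<longleftrightarrow> (\<forall>i\<ge>1. arrival d i \<le> t \<longrightarrow> (\<forall>j\<in>{1..i}. arrival d j \<le> t))"

lemma pc_obs: "obs_eq t d d' \<Longrightarrow> pc t d \<longleftrightarrow> pc t d'"
proof -
  assume o: "obs_eq t d d'"
  have h: "\<And>i. i \<ge> 1 \<Longrightarrow> (arrival d i \<le> t \<longleftrightarrow> arrival d' i \<le> t)"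
    using o unfolding obs_eq_def by blast
  show ?thesis unfolding pc_def
  proof
    assume A: "\<forall>i\<ge>1. arrival d i \<le> t \<longrightarrow> (\<forall>j\<in>{1..i}. arrival d j \<le> t)"
    show "\<forall>i\<ge>1. arrival d' i \<le> t \<longrightarrow> (\<forall>j\<in>{1..i}. arrival d' j \<le> t)"
    proof (intro allI impI ballI)
      fix i j assume i1: "1 \<le> i" and ai: "arrival d' i \<le> t" and j: "j \<in> {1..i}"
      have "arrival d i \<le> t" using h[OF i1] ai by blast
      then have "arrival d j \<le> t" using A i1 j by blast
      moreover have "j \<ge> 1" using j by simp
      ultimately show "arrival d' j \<le> t" using h by blast
    qed
  next
    assume A: "\<forall>i\<ge>1. arrival d' i \<le> t \<longrightarrow> (\<forall>j\<in>{1..i}. arrival d' j \<le> t)"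
    show "\<forall>i\<ge>1. arrival d i \<le> t \<longrightarrow> (\<forall>j\<in>{1..i}. arrival d j \<le> t)"
    proof (intro allI impI ballI)
      fix i j assume i1: "1 \<le> i" and ai: "arrival d i \<le> t" and j: "j \<in> {1..i}"
      have "arrival d' i \<le> t" using h[OF i1] ai by blast
      then have "arrival d' j \<le> t" using A i1 j by blast
      moreover have "j \<ge> 1" using j by simp
      ultimately show "arrival d j \<le> t" using h by blast
    qed
  qed
qed

lemma obs_sym: "obs_eq t d d' \<Longrightarrow> obs_eq t d' d"
  unfolding obs_eq_def by auto

lemma arr_eq:
  assumes "obs_eq t d d'" "pc t d" "i \<ge> 1" "arrival d i \<le> t"
  shows "arrival d' i = arrival d i"
proof -
  have "\<forall>j\<in>{1..i}. arrival d j \<le> t" using assms unfolding pc_def by blast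
  then have "\<forall>j\<in>{1..i}. d j = d' j" using assms(1) unfolding obs_eq_def by auto
  then show ?thesis unfolding arrival_def by (metis (no_types, lifting) sum.cong)
qed

lemma obs_mono:
  assumes "obs_eq t d d'" "pc t d" "s \<le> t"
  shows "obs_eq s d d'"
proof -
  have pc': "pc t d'" using pc_obs assms by blast
  have o': "obs_eq t d' d" using obs_sym assms by blast
  show ?thesis unfolding obs_eq_def
  proof (intro allI impI conjI)
    fix i :: nat assume i: "i \<ge> 1"
    show "arrival d i \<le> s \<longleftrightarrow> arrival d' i \<le> s"
    proof
      assume "arrival d i \<le> s"
      then show "arrival d' i \<le> s" using arr_eq[OF assms(1,2) i] assms(3) by auto
    next
      assume "arrival d' i \<le> s"
      then show "arrival d i \<le> s" using arr_eq[OF o' pc' i] assms(3) by auto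
    qed
    assume "arrival d i \<le> s"
    then have "arrival d i \<le> t" using assms(3) by linarith
    then show "d i = d' i" using assms(1) i unfolding obs_eq_def by blast
  qed
qed

lemma pc_nonneg:
  assumes "\<forall>i\<ge>1. d i \<ge> 0"
  shows "pc t d"
  unfolding pc_def
proof (intro allI impI ballI)
  fix i j assume "1 \<le> i" "arrival d i \<le> t" "j \<in> {1..i}"
  have "arrival d j \<le> arrival d i" unfolding arrival_def
    using \<open>j \<in> {1..i}\<close> assms by (intro sum_mono2) auto
  then show "arrival d j \<le> t" using \<open>arrival d i \<le> t\<close> by linarith
qed

lemma lift_causal:
  assumes "causal_estimator e"
  shows "causal_estimator (\<lambda>t dd. if s t \<le> t \<and> pc t dd then exp (a * (t - s t)) * e (s t) dd else 0)"
  unfolding causal_estimator_def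
proof (intro allI impI)
  fix t d d' assume o: "obs_eq t d d'"
  show "(if s t \<le> t \<and> pc t d then exp (a * (t - s t)) * e (s t) d else 0) =
        (if s t \<le> t \<and> pc t d' then exp (a * (t - s t)) * e (s t) d' else 0)"
  proof (cases "s t \<le> t \<and> pc t d")
    case True
    then have "obs_eq (s t) d d'" using obs_mono o by blast
    then have "e (s t) d = e (s t) d'" using assms unfolding causal_estimator_def by blast
    then show ?thesis using True pc_obs[OF o] by simp
  next
    case False
    then show ?thesis using pc_obs[OF o] by auto
  qed
qed

lemma err_id:
  fixes a t s x y :: real
  shows "\<bar>exp (a * t) * x - exp (a * (t - s)) * y\<bar> = exp (a * (t - s)) * \<bar>exp (a * s) * x - y\<bar>"
proof -
  have "exp (a * t) = exp (a * (t - s)) * exp (a * s)" by (simp add: mult_exp_exp algebra_simps)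
  then have "exp (a * t) * x - exp (a * (t - s)) * y = exp (a * (t - s)) * (exp (a * s) * x - y)"
    by (simp add: algebra_simps)
  then show ?thesis by (simp add: abs_mult)
qed

theorem lemma2:
  fixes M :: "'w measure" and a L \<Gamma>\<^sub>0 :: real
    and X0 :: "'w \<Rightarrow> real" and W S :: "nat \<Rightarrow> 'w \<Rightarrow> real"
  assumes P: "prob_space M"
    and a_pos: "a > 0"
    and X0_meas: "X0 \<in> borel_measurable M"
    and X0_bound: "AE \<omega> in M. \<bar>X0 \<omega>\<bar> < L"
    and indep: "prob_space.indep_vars M (\<lambda>_. borel)
                  (\<lambda>k. case k of Inl i \<Rightarrow> W i | Inr i \<Rightarrow> S i) ({1..} <+> {1..})"
    and W_ident: "\<forall>i\<ge>1. distr M borel (W i) = distr M borel (W 1)"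
    and S_ident: "\<forall>i\<ge>1. distr M borel (S i) = distr M borel (S 1)"
    and W_nonneg: "\<forall>i\<ge>1. AE \<omega> in M. W i \<omega> \<ge> 0"
    and S_nonneg: "\<forall>i\<ge>1. AE \<omega> in M. S i \<omega> \<ge> 0"
    and W_int: "integrable M (W 1)"
    and S_int: "integrable M (S 1)"
    and Gamma: "\<Gamma>\<^sub>0 > 1"
    and hyp: "\<exists>e. causal_estimator e
                \<and> (\<forall>t. (\<lambda>\<omega>. e t (\<lambda>i. W i \<omega> + S i \<omega>)) \<in> borel_measurable M)
                \<and> (\<forall>\<epsilon>>0. (\<lambda>n. measure M {\<omega> \<in> space M.
                      \<bar>exp (a * (\<Gamma>\<^sub>0 * (\<integral>\<omega>'. (\<Sum>i=1..n. W i \<omega>' + S i \<omega>') \<partial>M))) * X0 \<omega>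
                       - e (\<Gamma>\<^sub>0 * (\<integral>\<omega>'. (\<Sum>i=1..n. W i \<omega>' + S i \<omega>') \<partial>M))
                           (\<lambda>i. W i \<omega> + S i \<omega>)\<bar> > \<epsilon>}) \<longlonglongrightarrow> 0)"
  shows "\<exists>e. causal_estimator e
           \<and> (\<forall>t. (\<lambda>\<omega>. e t (\<lambda>i. W i \<omega> + S i \<omega>)) \<in> borel_measurable M)
           \<and> (\<forall>\<epsilon>>0. ((\<lambda>t. measure M {\<omega> \<in> space M.
                 \<bar>exp (a * t) * X0 \<omega> - e t (\<lambda>i. W i \<omega> + S i \<omega>)\<bar> > \<epsilon>}) \<longlongrightarrow> 0) at_top)"
proof -
  interpret prob_space M by (rule P)
  define \<tau> where "\<tau> n = \<Gamma>\<^sub>0 * (\<integral>\<omega>'. (\<Sum>i=1..n. W i \<omega>' + S i \<omega>') \<partial>M)" for n :: nat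
  obtain e where ec: "causal_estimator e"
    and em: "\<forall>t. (\<lambda>\<omega>. e t (\<lambda>i. W i \<omega> + S i \<omega>)) \<in> borel_measurable M"
    and eh: "\<forall>\<epsilon>>0. (\<lambda>n. measure M {\<omega> \<in> space M.
                      \<bar>exp (a * \<tau> n) * X0 \<omega> - e (\<tau> n) (\<lambda>i. W i \<omega> + S i \<omega>)\<bar> > \<epsilon>}) \<longlonglongrightarrow> 0"
    using hyp unfolding \<tau>_def by blast
  have em'[measurable]: "(\<lambda>\<omega>. e t (\<lambda>i. W i \<omega> + S i \<omega>)) \<in> borel_measurable M" for t
    using em by blast
  note X0_meas[measurable]
  have RV: "\<forall>k\<in>{1..} <+> {1..}. (case k of Inl i \<Rightarrow> W i | Inr i \<Rightarrow> S i) \<in> measurable M borel"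
    using indep unfolding indep_vars_def by blast
  have Wm: "W i \<in> borel_measurable M" if "i \<ge> 1" for i
    using bspec[OF RV, of "Inl i"] that by auto
  have Sm: "S i \<in> borel_measurable M" if "i \<ge> 1" for i
    using bspec[OF RV, of "Inr i"] that by auto
  have Am[measurable]: "(\<lambda>\<omega>. arrival (\<lambda>i. W i \<omega> + S i \<omega>) k) \<in> borel_measurable M" for k
    unfolding arrival_def
    apply (rule borel_measurable_sum)
    apply (rule borel_measurable_add)
    using Wm Sm by auto
  have pcm: "{\<omega> \<in> space M. pc t (\<lambda>i. W i \<omega> + S i \<omega>)} \<in> sets M" for t
    unfolding pc_def by measurable
  have Wi: "integrable M (W i) \<and> integral\<^sup>L M (W i) = integral\<^sup>L M (W 1)" if "i \<ge> 1" for i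
  proof -
    have m1: "W i \<in> borel_measurable M" "W 1 \<in> borel_measurable M" using Wm that by auto
    have e1: "integrable M (W i) \<longleftrightarrow> integrable (distr M borel (W i)) (\<lambda>x. x)"
      using integrable_distr_eq[OF m1(1), of "\<lambda>x. x"] by simp
    have e2: "integrable M (W 1) \<longleftrightarrow> integrable (distr M borel (W 1)) (\<lambda>x. x)"
      using integrable_distr_eq[OF m1(2), of "\<lambda>x. x"] by simp
    have e3: "integral\<^sup>L M (W i) = integral\<^sup>L (distr M borel (W i)) (\<lambda>x. x)"
      using integral_distr[OF m1(1), of "\<lambda>x::real. x"] by simp
    have e4: "integral\<^sup>L M (W 1) = integral\<^sup>L (distr M borel (W 1)) (\<lambda>x. x)"
      using integral_distr[OF m1(2), of "\<lambda>x::real. x"] by simp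
    have "distr M borel (W i) = distr M borel (W 1)" using W_ident that by blast
    then show ?thesis using e1 e2 e3 e4 W_int by simp
  qed
  have Si: "integrable M (S i) \<and> integral\<^sup>L M (S i) = integral\<^sup>L M (S 1)" if "i \<ge> 1" for i
  proof -
    have m1: "S i \<in> borel_measurable M" "S 1 \<in> borel_measurable M" using Sm that by auto
    have e1: "integrable M (S i) \<longleftrightarrow> integrable (distr M borel (S i)) (\<lambda>x. x)"
      using integrable_distr_eq[OF m1(1), of "\<lambda>x. x"] by simp
    have e2: "integrable M (S 1) \<longleftrightarrow> integrable (distr M borel (S 1)) (\<lambda>x. x)"
      using integrable_distr_eq[OF m1(2), of "\<lambda>x. x"] by simp
    have e3: "integral\<^sup>L M (S i) = integral\<^sup>L (distr M borel (S i)) (\<lambda>x. x)"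
      using integral_distr[OF m1(1), of "\<lambda>x::real. x"] by simp
    have e4: "integral\<^sup>L M (S 1) = integral\<^sup>L (distr M borel (S 1)) (\<lambda>x. x)"
      using integral_distr[OF m1(2), of "\<lambda>x::real. x"] by simp
    have "distr M borel (S i) = distr M borel (S 1)" using S_ident that by blast
    then show ?thesis using e1 e2 e3 e4 S_int by simp
  qed
  define \<mu> where "\<mu> = integral\<^sup>L M (W 1) + integral\<^sup>L M (S 1)"
  have \<tau>_eq: "\<tau> n = \<Gamma>\<^sub>0 * (real n * \<mu>)" for n
  proof -
    have "(\<integral>\<omega>'. (\<Sum>i=1..n. W i \<omega>' + S i \<omega>') \<partial>M) = (\<Sum>i=1..n. integral\<^sup>L M (\<lambda>\<omega>'. W i \<omega>' + S i \<omega>'))"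
      by (rule Bochner_Integration.integral_sum) (use Wi Si in auto)
    also have "\<dots> = (\<Sum>i=1..n. \<mu>)"
    proof (rule sum.cong)
      fix i assume "i \<in> {1..n}"
      then have "i \<ge> 1" by simp
      then show "integral\<^sup>L M (\<lambda>\<omega>'. W i \<omega>' + S i \<omega>') = \<mu>"
        using Wi[of i] Si[of i] unfolding \<mu>_def by (simp add: integral_add)
    qed simp
    finally show ?thesis unfolding \<tau>_def by simp
  qed
  have \<mu>_nn: "\<mu> \<ge> 0"
  proof -
    have "integral\<^sup>L M (W 1) \<ge> 0" by (rule integral_nonneg_AE) (use W_nonneg in auto)
    moreover have "integral\<^sup>L M (S 1) \<ge> 0" by (rule integral_nonneg_AE) (use S_nonneg in auto)
    ultimately show ?thesis unfolding \<mu>_def by simp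
  qed
  have G: "AE \<omega> in M. \<forall>i. 1 \<le> i \<longrightarrow> W i \<omega> + S i \<omega> \<ge> 0"
    unfolding AE_all_countable
  proof
    fix i :: nat
    show "AE \<omega> in M. 1 \<le> i \<longrightarrow> W i \<omega> + S i \<omega> \<ge> 0"
    proof (cases "1 \<le> i")
      case True
      then have "AE \<omega> in M. W i \<omega> \<ge> 0" "AE \<omega> in M. S i \<omega> \<ge> 0" using W_nonneg S_nonneg by auto
      then show ?thesis by eventually_elim auto
    next
      case False
      then show ?thesis by simp
    qed
  qed
  define E' where "E' N = (\<lambda>t dd. if \<tau> (N t) \<le> t \<and> pc t dd
        then exp (a * (t - \<tau> (N t))) * e (\<tau> (N t)) dd else 0)" for N :: "real \<Rightarrow> nat"
  have E'c: "causal_estimator (E' N)" for N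
    unfolding E'_def by (rule lift_causal[OF ec])
  have E'm: "(\<lambda>\<omega>. E' N t (\<lambda>i. W i \<omega> + S i \<omega>)) \<in> borel_measurable M" for N t
  proof (cases "\<tau> (N t) \<le> t")
    case True
    then show ?thesis unfolding E'_def
      by (simp, intro measurable_If pcm) auto
  next
    case False
    then show ?thesis unfolding E'_def by simp
  qed
  define f where "f n \<delta> = measure M {\<omega> \<in> space M.
        \<bar>exp (a * \<tau> n) * X0 \<omega> - e (\<tau> n) (\<lambda>i. W i \<omega> + S i \<omega>)\<bar> > \<delta>}" for n \<delta>
  have bound: "measure M {\<omega> \<in> space M.
                 \<bar>exp (a * t) * X0 \<omega> - E' N t (\<lambda>i. W i \<omega> + S i \<omega>)\<bar> > \<epsilon>} \<le> f (N t) \<delta>"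
    if st: "\<tau> (N t) \<le> t" and dl: "\<delta> \<le> \<epsilon> * exp (- (a * (t - \<tau> (N t))))" for N t \<epsilon> \<delta>
  proof -
    define s where "s = \<tau> (N t)"
    have B: "{\<omega> \<in> space M. \<bar>exp (a * s) * X0 \<omega> - e s (\<lambda>i. W i \<omega> + S i \<omega>)\<bar> > \<delta>} \<in> sets M"
      by measurable
    have "AE \<omega> in M. \<omega> \<in> {\<omega> \<in> space M. \<bar>exp (a * t) * X0 \<omega> - E' N t (\<lambda>i. W i \<omega> + S i \<omega>)\<bar> > \<epsilon>}
        \<longrightarrow> \<omega> \<in> {\<omega> \<in> space M. \<bar>exp (a * s) * X0 \<omega> - e s (\<lambda>i. W i \<omega> + S i \<omega>)\<bar> > \<delta>}"
      using G
    proof eventually_elim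
      case (elim \<omega>)
      have pc: "pc t (\<lambda>i. W i \<omega> + S i \<omega>)" by (rule pc_nonneg) (use elim in auto)
      define r where "r = \<bar>exp (a * s) * X0 \<omega> - e s (\<lambda>i. W i \<omega> + S i \<omega>)\<bar>"
      define x where "x = a * (t - s)"
      have "E' N t (\<lambda>i. W i \<omega> + S i \<omega>) = exp (a * (t - s)) * e s (\<lambda>i. W i \<omega> + S i \<omega>)"
        unfolding E'_def s_def using pc st by simp
      then have id: "\<bar>exp (a * t) * X0 \<omega> - E' N t (\<lambda>i. W i \<omega> + S i \<omega>)\<bar> = exp x * r"
        unfolding r_def x_def using err_id by simp
      show ?case
      proof
        assume "\<omega> \<in> {\<omega> \<in> space M. \<bar>exp (a * t) * X0 \<omega> - E' N t (\<lambda>i. W i \<omega> + S i \<omega>)\<bar> > \<epsilon>}"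
        then have w: "\<omega> \<in> space M" and lt: "\<epsilon> < exp x * r" using id by auto
        have "\<epsilon> * exp (- x) < (exp x * r) * exp (- x)"
          using lt by (intro mult_strict_right_mono) auto
        moreover have "(exp x * r) * exp (- x) = r" by (simp add: exp_minus)
        moreover have "\<delta> \<le> \<epsilon> * exp (- x)" using dl unfolding x_def s_def .
        ultimately have "\<delta> < r" by linarith
        then show "\<omega> \<in> {\<omega> \<in> space M. \<bar>exp (a * s) * X0 \<omega> - e s (\<lambda>i. W i \<omega> + S i \<omega>)\<bar> > \<delta>}"
          using w unfolding r_def by simp
      qed
    qed
    then have "measure M {\<omega> \<in> space M. \<bar>exp (a * t) * X0 \<omega> - E' N t (\<lambda>i. W i \<omega> + S i \<omega>)\<bar> > \<epsilon>}
      \<le> measure M {\<omega> \<in> space M. \<bar>exp (a * s) * X0 \<omega> - e s (\<lambda>i. W i \<omega> + S i \<omega>)\<bar> > \<delta>}"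
      by (rule finite_measure_mono_AE[OF _ B])
    then show ?thesis unfolding f_def s_def .
  qed
  show ?thesis
  proof (cases "\<mu> > 0")
    case True
    define h where "h = \<Gamma>\<^sub>0 * \<mu>"
    have hpos: "h > 0" using Gamma True by (simp add: h_def)
    define N where "N t = nat \<lfloor>t / h\<rfloor>" for t
    have tauN: "\<tau> (N t) = real (N t) * h" for t by (simp add: \<tau>_eq h_def)
    have Nfl: "real (N t) = of_int \<lfloor>t/h\<rfloor>" if "t \<ge> 0" for t
      using that hpos by (simp add: N_def)
    have le: "\<tau> (N t) \<le> t" if "t \<ge> 0" for t
    proof -
      have "real_of_int \<lfloor>t/h\<rfloor> * h \<le> (t/h) * h"
        by (rule mult_right_mono[OF of_int_floor_le]) (use hpos in simp)
      also have "(t/h) * h = t" using hpos by simp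
      finally show ?thesis using tauN[of t] Nfl[OF that] by simp
    qed
    have gt: "t - \<tau> (N t) < h" if "t \<ge> 0" for t
    proof -
      have "t/h < real_of_int \<lfloor>t/h\<rfloor> + 1" by (rule real_of_int_floor_add_one_gt)
      then have "(t/h) * h < (real_of_int \<lfloor>t/h\<rfloor> + 1) * h"
        by (rule mult_strict_right_mono) (use hpos in simp)
      then have "t < (real_of_int \<lfloor>t/h\<rfloor> + 1) * h" using hpos by simp
      then show ?thesis using tauN[of t] Nfl[OF that] by (simp add: algebra_simps)
    qed
    have NF: "filterlim N at_top at_top"
      unfolding filterlim_at_top
    proof
      fix Z :: nat
      show "eventually (\<lambda>t. Z \<le> N t) at_top"
        using eventually_ge_at_top[of "real Z * h"]
      proof eventually_elim
        case (elim t)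
        then have "real Z \<le> t / h" using hpos by (simp add: pos_le_divide_eq)
        then have "int Z \<le> \<lfloor>t/h\<rfloor>" by (simp add: le_floor_iff)
        then show ?case by (simp add: N_def)
      qed
    qed
    have lim: "((\<lambda>t. measure M {\<omega> \<in> space M.
                 \<bar>exp (a * t) * X0 \<omega> - E' N t (\<lambda>i. W i \<omega> + S i \<omega>)\<bar> > \<epsilon>}) \<longlongrightarrow> 0) at_top"
      if ep: "\<epsilon> > 0" for \<epsilon>
    proof -
      define \<delta> where "\<delta> = \<epsilon> * exp (- (a * h))"
      have dpos: "\<delta> > 0" using ep by (simp add: \<delta>_def)
      have "(\<lambda>n. f n \<delta>) \<longlonglongrightarrow> 0" using eh dpos unfolding f_def by blast
      then have l: "((\<lambda>t. f (N t) \<delta>) \<longlongrightarrow> 0) at_top" by (rule filterlim_compose[OF _ NF])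
      show ?thesis
      proof (rule tendsto_sandwich[OF _ _ tendsto_const l])
        show "eventually (\<lambda>t. 0 \<le> measure M {\<omega> \<in> space M.
                 \<bar>exp (a * t) * X0 \<omega> - E' N t (\<lambda>i. W i \<omega> + S i \<omega>)\<bar> > \<epsilon>}) at_top"
          by simp
        show "eventually (\<lambda>t. measure M {\<omega> \<in> space M.
                 \<bar>exp (a * t) * X0 \<omega> - E' N t (\<lambda>i. W i \<omega> + S i \<omega>)\<bar> > \<epsilon>} \<le> f (N t) \<delta>) at_top"
          using eventually_ge_at_top[of 0]
        proof eventually_elim
          case (elim t)
          have "a * (t - \<tau> (N t)) \<le> a * h" using gt[OF elim] a_pos by simp
          then have "exp (- (a * h)) \<le> exp (- (a * (t - \<tau> (N t))))" by simp
          then have "\<delta> \<le> \<epsilon> * exp (- (a * (t - \<tau> (N t))))"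
            unfolding \<delta>_def using ep by (intro mult_left_mono) auto
          then show ?case by (rule bound[of N t, OF le[OF elim]])
        qed
      qed
    qed
    show ?thesis
      by (rule exI[of _ "E' N"]) (use E'c E'm lim in blast)
  next
    case False
    then have mu0: "\<mu> = 0" using \<mu>_nn by simp
    define N where "N t = (0::nat)" for t :: real
    have tau0: "\<tau> n = 0" for n by (simp add: \<tau>_eq mu0)
    have f0: "f 0 \<delta> = 0" if dp: "\<delta> > 0" for \<delta>
    proof -
      have fe: "(\<lambda>n. f n \<delta>) = (\<lambda>n. f 0 \<delta>)" unfolding f_def tau0 ..
      moreover have "(\<lambda>n. f n \<delta>) \<longlonglongrightarrow> 0" using eh dp unfolding f_def by blast
      ultimately have "(\<lambda>n. f 0 \<delta>) \<longlonglongrightarrow> 0" by (simp only: fe)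
      then show ?thesis by (simp add: LIMSEQ_const_iff)
    qed
    have lim: "((\<lambda>t. measure M {\<omega> \<in> space M.
                 \<bar>exp (a * t) * X0 \<omega> - E' N t (\<lambda>i. W i \<omega> + S i \<omega>)\<bar> > \<epsilon>}) \<longlongrightarrow> 0) at_top"
      if ep: "\<epsilon> > 0" for \<epsilon>
    proof (rule tendsto_sandwich[OF _ _ tendsto_const tendsto_const])
      show "eventually (\<lambda>t. 0 \<le> measure M {\<omega> \<in> space M.
               \<bar>exp (a * t) * X0 \<omega> - E' N t (\<lambda>i. W i \<omega> + S i \<omega>)\<bar> > \<epsilon>}) at_top"
        by simp
      show "eventually (\<lambda>t. measure M {\<omega> \<in> space M.
               \<bar>exp (a * t) * X0 \<omega> - E' N t (\<lambda>i. W i \<omega> + S i \<omega>)\<bar> > \<epsilon>} \<le> 0) at_top"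
        using eventually_ge_at_top[of 0]
      proof eventually_elim
        case (elim t)
        have st: "\<tau> (N t) \<le> t" using elim tau0 by simp
        have "measure M {\<omega> \<in> space M.
               \<bar>exp (a * t) * X0 \<omega> - E' N t (\<lambda>i. W i \<omega> + S i \<omega>)\<bar> > \<epsilon>}
              \<le> f (N t) (\<epsilon> * exp (- (a * (t - \<tau> (N t)))))"
          by (rule bound[of N t, OF st order_refl])
        also have "\<dots> = 0" unfolding N_def using ep by (intro f0) simp
        finally show ?case .
      qed
    qed
    show ?thesis
      by (rule exI[of _ "E' N"]) (use E'c E'm lim in blast)
  qed
qed

end
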